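(* Let $B_J\in\mathbb R^{n\times n}$ satisfy $B_J\ge O$ elementwise and $\rho(B_J)>0$, and let $\mathcal B=(B_1,\dots,B_d)$ be a splitting of $B_J$ of order $d\ge2$. Then: (a1) $\rho(B_J)<1\iff\rho(T(\mathcal B))<1$; (a2) $\rho(B_J)=1\iff\rho(T(\mathcal B))=1$; (a3) $\rho(B_J)>1\iff\rho(T(\mathcal B))>1$.
   Context: For $B\in\mathbb R^{n\times n}$, a splitting of $B$ of order $d\ge1$ is an ordered $d$-tuple $\mathcal B=(B_1,\dots,B_d)$ of real $n\times n$ matrices with $B_p\neq O$ for all $p$, $\sum_{p=1}^d B_p=B$, and $B_p\circ B_q=O$ (Hadamard product) for $p\ne q$. The iteration matrix of $\mathcal B$ is the $dn\times dn$ matrix $T(\mathcal B)=(I_{dn}-\mathcal L)^{-1}\mathcal U$, where $\mathcal L,\mathcal U$ are $d\times d$ block matrices with $n\times n$ blocks, $\mathcal L_{ij}=B_j$ if $i>j$ and $O$ otherwise, $\mathcal U_{ij}=B_j$ if $i\le j$ and $O$ otherwise. $\rho$ denotes spectral radius. *)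

theory Defs
  imports "Jordan_Normal_Form.Spectral_Radius" "Jordan_Normal_Form.Gauss_Jordan_Elimination"
begin

definition hadamard_mat :: "real mat \<Rightarrow> real mat \<Rightarrow> real mat" where
  "hadamard_mat A C = mat (dim_row A) (dim_col A) (\<lambda>(i,j). A $$ (i,j) * C $$ (i,j))"

definition is_splitting :: "nat \<Rightarrow> real mat \<Rightarrow> real mat list \<Rightarrow> bool" where
  "is_splitting n B Bs \<longleftrightarrow>
     length Bs \<ge> 1 \<and>
     (\<forall>p < length Bs. Bs ! p \<in> carrier_mat n n \<and> Bs ! p \<noteq> 0\<^sub>m n n) \<and>
     mat n n (\<lambda>(i,j). \<Sum>p<length Bs. (Bs ! p) $$ (i,j)) = B \<and>
     (\<forall>p < length Bs. \<forall>q < length Bs. p \<noteq> q \<longrightarrow> hadamard_mat (Bs ! p) (Bs ! q) = 0\<^sub>m n n)"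

(* block matrices: block (a,b) of size n x n sits at rows a*n.., columns b*n.. *)
definition split_L :: "nat \<Rightarrow> real mat list \<Rightarrow> real mat" where
  "split_L n Bs = mat (length Bs * n) (length Bs * n)
     (\<lambda>(i,j). if i div n > j div n then (Bs ! (j div n)) $$ (i mod n, j mod n) else 0)"

definition split_U :: "nat \<Rightarrow> real mat list \<Rightarrow> real mat" where
  "split_U n Bs = mat (length Bs * n) (length Bs * n)
     (\<lambda>(i,j). if i div n \<le> j div n then (Bs ! (j div n)) $$ (i mod n, j mod n) else 0)"

definition iteration_mat :: "nat \<Rightarrow> real mat list \<Rightarrow> real mat" where
  "iteration_mat n Bs = the (mat_inverse (1\<^sub>m (length Bs * n) - split_L n Bs)) * split_U n Bs"

definition rho :: "real mat \<Rightarrow> real" where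
  "rho A = spectral_radius (map_mat complex_of_real A)"

end

theory Submission
  imports Defs
begin


lemma K2:
  fixes A :: "real mat"
  assumes A: "A \<in> carrier_mat N N" and N: "N > 0"
  and nn: "\<forall>i<N. \<forall>j<N. A$$(i,j) \<ge> 0"
  and u: "\<forall>i<N. u i > 0"
  and le: "\<forall>i<N. (\<Sum>j=0..<N. A$$(i,j) * u j) \<le> \<theta> * u i"
  shows "rho A \<le> \<theta>"
proof -
  let ?C = "map_mat complex_of_real A"
  have C: "?C \<in> carrier_mat N N" using A by auto
  from spectral_radius_mem_max(1)[OF C N] obtain \<mu> where mu: "\<mu> \<in> spectrum ?C" "rho A = cmod \<mu>"
    unfolding rho_def by auto
  from mu(1) obtain z where ev: "eigenvector ?C z \<mu>" unfolding spectrum_def eigenvalue_def by auto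
  hence z: "z \<in> carrier_vec N" "z \<noteq> 0\<^sub>v N" "?C *\<^sub>v z = \<mu> \<cdot>\<^sub>v z" unfolding eigenvector_def using C by auto
  define S where "S = (\<lambda>i. cmod (z$i) / u i) ` {0..<N}"
  have fS: "finite S" "S \<noteq> {}" using N unfolding S_def by auto
  from Max_in[OF fS] obtain i0 where i0: "i0 < N" "Max S = cmod(z$i0)/u i0" unfolding S_def by auto
  define t where "t = Max S"
  have tj: "cmod (z$j) \<le> t * u j" if "j < N" for j
  proof -
    have "cmod (z$j) / u j \<le> t" unfolding t_def using Max_ge[OF fS(1)] that unfolding S_def by auto
    thus ?thesis using u that by (simp add: divide_le_eq mult.commute)
  qed
  obtain j where j: "j < N" "z$j \<noteq> 0" using z(1,2) by (metis carrier_vecD eq_vecI index_zero_vec(1) index_zero_vec(2))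
  have "0 < cmod (z$j)" using j by auto
  also have "\<dots> \<le> t * u j" using tj j by auto
  finally have "0 < t * u j" .
  moreover have "u j > 0" using u j by auto
  ultimately have tpos: "t > 0" by (simp add: zero_less_mult_iff)
  have zi0: "cmod (z$i0) = t * u i0" using i0 u unfolding t_def by auto
  have "(?C *\<^sub>v z)$i0 = (\<Sum>j=0..<N. complex_of_real (A$$(i0,j)) * z$j)"
    using A z(1) i0 by (auto simp: scalar_prod_def row_def)
  hence "\<mu> * z$i0 = (\<Sum>j=0..<N. complex_of_real (A$$(i0,j)) * z$j)" using z i0 by auto
  hence "cmod \<mu> * cmod (z$i0) = cmod (\<Sum>j=0..<N. complex_of_real (A$$(i0,j)) * z$j)"
    by (metis norm_mult)
  also have "\<dots> \<le> (\<Sum>j=0..<N. cmod (complex_of_real (A$$(i0,j)) * z$j))" by (rule norm_sum)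
  also have "\<dots> = (\<Sum>j=0..<N. A$$(i0,j) * cmod (z$j))"
    using nn i0 by (intro sum.cong, auto simp: norm_mult)
  also have "\<dots> \<le> (\<Sum>j=0..<N. A$$(i0,j) * (t * u j))"
    using nn i0 tj by (intro sum_mono mult_left_mono, auto)
  also have "\<dots> = t * (\<Sum>j=0..<N. A$$(i0,j) * u j)" by (simp add: sum_distrib_left algebra_simps)
  also have "\<dots> \<le> t * (\<theta> * u i0)" using le i0 tpos by auto
  finally have "cmod \<mu> * (t * u i0) \<le> \<theta> * (t * u i0)" using zi0 by (simp add: algebra_simps)
  hence "cmod \<mu> \<le> \<theta>" using tpos u i0 by (simp add: mult_le_cancel_right)
  thus ?thesis using mu by auto
qed

lemma smult_mat_vec: "A \<in> carrier_mat nr nc \<Longrightarrow> v \<in> carrier_vec nc \<Longrightarrow>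
  (k \<cdot>\<^sub>m A) *\<^sub>v v = (k::'a::comm_ring) \<cdot>\<^sub>v (A *\<^sub>v v)"
  by (rule eq_vecI, auto simp: scalar_prod_def sum_distrib_left algebra_simps)

lemma rho_smult_le:
  fixes A :: "real mat"
  assumes A: "A \<in> carrier_mat N N" and N: "N > 0" and c: "c > 0"
  shows "rho (c \<cdot>\<^sub>m A) \<le> c * rho A"
proof -
  let ?C = "map_mat complex_of_real A"
  have C: "?C \<in> carrier_mat N N" using A by auto
  have eq: "map_mat complex_of_real (c \<cdot>\<^sub>m A) = complex_of_real c \<cdot>\<^sub>m ?C"
    by (rule eq_matI, auto)
  have C2: "complex_of_real c \<cdot>\<^sub>m ?C \<in> carrier_mat N N" using C by auto
  from spectral_radius_mem_max(1)[OF C2 N] obtain \<mu> where mu: "\<mu> \<in> spectrum (complex_of_real c \<cdot>\<^sub>m ?C)" 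
    "rho (c \<cdot>\<^sub>m A) = cmod \<mu>"
    unfolding rho_def eq by auto
  from mu(1) obtain z where ev: "eigenvector (complex_of_real c \<cdot>\<^sub>m ?C) z \<mu>" unfolding spectrum_def eigenvalue_def by auto
  hence z: "z \<in> carrier_vec N" "z \<noteq> 0\<^sub>v N" "(complex_of_real c \<cdot>\<^sub>m ?C) *\<^sub>v z = \<mu> \<cdot>\<^sub>v z" unfolding eigenvector_def using C by auto
  have "?C *\<^sub>v z = (\<mu> / complex_of_real c) \<cdot>\<^sub>v z"
  proof -
    have "(complex_of_real c \<cdot>\<^sub>m ?C) *\<^sub>v z = complex_of_real c \<cdot>\<^sub>v (?C *\<^sub>v z)"
      using C z(1) by (simp add: smult_mat_vec)
    hence "complex_of_real c \<cdot>\<^sub>v (?C *\<^sub>v z) = \<mu> \<cdot>\<^sub>v z" using z by simp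
    hence "(1 / complex_of_real c) \<cdot>\<^sub>v (complex_of_real c \<cdot>\<^sub>v (?C *\<^sub>v z)) = (1/complex_of_real c) \<cdot>\<^sub>v (\<mu> \<cdot>\<^sub>v z)" by simp
    thus ?thesis using c by (simp add: smult_smult_assoc)
  qed
  hence "eigenvector ?C z (\<mu> / complex_of_real c)" unfolding eigenvector_def using z C by auto
  hence "\<mu> / complex_of_real c \<in> spectrum ?C" unfolding spectrum_def eigenvalue_def by auto
  hence "cmod (\<mu> / complex_of_real c) \<le> rho A" unfolding rho_def
    using spectral_radius_mem_max(2)[OF C N] by auto
  hence "cmod \<mu> / c \<le> rho A" using c by (simp add: norm_divide)
  thus ?thesis using mu c by (simp add: divide_le_eq mult.commute)
qed


thm of_real_hom.mat_hom_pow real_arch_pow_inv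

lemma smult_pow_mat:
  assumes A: "(A :: 'a :: comm_ring_1 mat) \<in> carrier_mat n n"
  shows "(k \<cdot>\<^sub>m A) ^\<^sub>m m = k^m \<cdot>\<^sub>m (A ^\<^sub>m m)"
proof (induct m)
  case 0
  then show ?case using A by (auto intro!: eq_matI)
next
  case (Suc m)
  have "(k \<cdot>\<^sub>m A) ^\<^sub>m Suc m = (k^m \<cdot>\<^sub>m (A ^\<^sub>m m)) * (k \<cdot>\<^sub>m A)" using Suc by simp
  also have "\<dots> = k^m \<cdot>\<^sub>m ((A ^\<^sub>m m) * (k \<cdot>\<^sub>m A))"
    using A by (intro mult_smult_assoc_mat, auto)
  also have "(A ^\<^sub>m m) * (k \<cdot>\<^sub>m A) = k \<cdot>\<^sub>m (A ^\<^sub>m m * A)"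
    using A by (intro mult_smult_distrib, auto)
  finally show ?case using A by (auto intro!: eq_matI)
qed

lemma K0:
  fixes A :: "real mat"
  assumes A: "A \<in> carrier_mat N N" and r1: "rho A < 1" and e: "\<epsilon> > 0"
  shows "\<exists>K. \<forall>i<N. \<forall>j<N. \<bar>(A ^\<^sub>m K) $$ (i,j)\<bar> \<le> \<epsilon>"
proof (cases "N = 0")
  case True thus ?thesis by auto
next
  case False
  hence N: "N > 0" by auto
  define r where "r = (max (rho A) 0 + 1) / 2"
  have r: "0 < r" "r < 1" "rho A < r" unfolding r_def using r1 by auto
  have A1: "(1/r) \<cdot>\<^sub>m A \<in> carrier_mat N N" using A by auto
  have "rho ((1/r) \<cdot>\<^sub>m A) \<le> (1/r) * rho A"
    using rho_smult_le[OF A N, of "1/r"] r by auto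
  also have "\<dots> < 1" using r by (simp add: divide_less_eq)
  finally have lt: "spectral_radius (map_mat complex_of_real ((1/r) \<cdot>\<^sub>m A)) < 1" unfolding rho_def .
  have C1: "map_mat complex_of_real ((1/r) \<cdot>\<^sub>m A) \<in> carrier_mat N N" using A by auto
  from spectral_radius_jnf_norm_bound_less_1_upper_triangular[OF C1 lt]
  obtain c where c: "\<And>k. norm_bound (map_mat complex_of_real ((1/r) \<cdot>\<^sub>m A) ^\<^sub>m k) c" by auto
  have bnd: "\<bar>(A ^\<^sub>m k) $$ (i,j)\<bar> \<le> c * r^k" if ij: "i < N" "j < N" for i j k
  proof -
    have "map_mat complex_of_real ((1/r) \<cdot>\<^sub>m A) ^\<^sub>m k = map_mat complex_of_real (((1/r) \<cdot>\<^sub>m A) ^\<^sub>m k)"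
      using of_real_hom.mat_hom_pow[OF A1] by metis
    also have "((1/r) \<cdot>\<^sub>m A) ^\<^sub>m k = (1/r)^k \<cdot>\<^sub>m (A ^\<^sub>m k)" by (rule smult_pow_mat[OF A])
    finally have "norm_bound (map_mat complex_of_real ((1/r)^k \<cdot>\<^sub>m (A ^\<^sub>m k))) c" using c by metis
    hence "cmod (complex_of_real (((1/r)^k \<cdot>\<^sub>m (A ^\<^sub>m k)) $$ (i,j))) \<le> c"
      unfolding norm_bound_def using ij A by auto
    hence "\<bar>((1/r)^k \<cdot>\<^sub>m (A ^\<^sub>m k)) $$ (i,j)\<bar> \<le> c" by (simp only: norm_of_real)
    hence "\<bar>(1/r)^k * (A ^\<^sub>m k) $$ (i,j)\<bar> \<le> c" using ij A by simp
    hence "(1/r)^k * \<bar>(A ^\<^sub>m k) $$ (i,j)\<bar> \<le> c" using r by (simp add: abs_mult)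
    thus ?thesis using r by (simp add: power_divide divide_le_eq mult.commute)
  qed
  show ?thesis
  proof (cases "c \<le> 0")
    case True
    show ?thesis by (rule exI[of _ 0], intro allI impI, rule order.trans[OF bnd], insert True e, auto)
  next
    case False
    from real_arch_pow_inv[of "\<epsilon>/c" r] r e False obtain K where "r^K < \<epsilon>/c" by auto
    hence "c * r^K \<le> \<epsilon>" using False by (simp add: field_simps)
    thus ?thesis using bnd by (intro exI[of _ K], auto intro: order.trans)
  qed
qed



definition mv :: "real mat \<Rightarrow> (nat \<Rightarrow> real) \<Rightarrow> nat \<Rightarrow> real" where
  "mv A v i = (\<Sum>j=0..<dim_col A. A$$(i,j) * v j)"

lemma mv_mult: assumes A: "A \<in> carrier_mat N N" and M: "M \<in> carrier_mat N N" and i: "i < N"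
  shows "mv A (mv M c) i = mv (A * M) c i"
proof -
  have "mv A (mv M c) i = (\<Sum>j=0..<N. \<Sum>k=0..<N. A$$(i,j) * (M$$(j,k) * c k))"
    unfolding mv_def using A M by (simp add: sum_distrib_left)
  also have "\<dots> = (\<Sum>k=0..<N. \<Sum>j=0..<N. A$$(i,j) * (M$$(j,k) * c k))" by (rule sum.swap)
  also have "\<dots> = mv (A * M) c i" unfolding mv_def using A M i
    by (auto simp: scalar_prod_def row_def col_def sum_distrib_right sum_distrib_left algebra_simps intro!: sum.cong)
  finally show ?thesis .
qed

lemma pow_mat_Suc_left: assumes A: "(A :: 'a::semiring_1 mat) \<in> carrier_mat N N"
  shows "A * A ^\<^sub>m m = A ^\<^sub>m (Suc m)"
proof (induct m)
  case 0 then show ?case using A by simp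
next
  case (Suc m)
  have "A * A ^\<^sub>m Suc m = (A * A ^\<^sub>m m) * A" using assoc_mult_mat[OF A pow_carrier_mat[OF A, of m] A] by simp
  then show ?case using Suc by simp
qed

lemma mv_one: assumes i: "i < N" shows "mv (1\<^sub>m N) c i = c i"
proof -
  have "mv (1\<^sub>m N) c i = (\<Sum>j=0..<N. (if i = j then c j else 0))" unfolding mv_def using i
    by (intro sum.cong, auto)
  also have "\<dots> = c i" using i by simp
  finally show ?thesis .
qed

lemma ITER: assumes A: "A \<in> carrier_mat N N" and i: "i < N"
  shows "(\<Sum>m<K. mv (A ^\<^sub>m m) c i) - mv A (\<lambda>l. \<Sum>m<K. mv (A ^\<^sub>m m) c l) i = c i - mv (A ^\<^sub>m K) c i"
proof -
  have "mv A (\<lambda>l. \<Sum>m<K. mv (A ^\<^sub>m m) c l) i = (\<Sum>m<K. mv A (mv (A ^\<^sub>m m) c) i)"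
    unfolding mv_def using A by (simp add: sum_distrib_left sum.swap[of _ "{0..<N}"])
  also have "\<dots> = (\<Sum>m<K. mv (A ^\<^sub>m Suc m) c i)"
    using mv_mult[OF A _ i] pow_mat_Suc_left[OF A] A by (intro sum.cong, auto)
  finally have eq: "mv A (\<lambda>l. \<Sum>m<K. mv (A ^\<^sub>m m) c l) i = (\<Sum>m<K. mv (A ^\<^sub>m Suc m) c i)" .
  have tel: "(\<Sum>m<K. mv (A ^\<^sub>m m) c i) - (\<Sum>m<K. mv (A ^\<^sub>m Suc m) c i) = mv (A ^\<^sub>m 0) c i - mv (A ^\<^sub>m K) c i"
    by (induct K, auto)
  have "mv (A ^\<^sub>m 0) c i = c i" using A mv_one[OF i] by simp
  thus ?thesis using eq tel by simp
qed

lemma pow_nonneg: assumes A: "A \<in> carrier_mat N N" and nn: "\<forall>i<N. \<forall>j<N. A$$(i,j) \<ge> (0::real)"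
  shows "\<forall>i<N. \<forall>j<N. (A ^\<^sub>m m)$$(i,j) \<ge> 0"
proof (induct m)
  case 0 then show ?case using A by auto
next
  case (Suc m)
  then show ?case using A nn
    by (auto simp: scalar_prod_def row_def col_def intro!: sum_nonneg)
qed

lemma mv_nonneg: assumes A: "A \<in> carrier_mat N N" and nn: "\<forall>i<N. \<forall>j<N. A$$(i,j) \<ge> 0"
  and v: "\<forall>j<N. v j \<ge> 0" and i: "i < N"
  shows "mv A v i \<ge> 0"
  unfolding mv_def using A nn v i by (auto intro!: sum_nonneg)

lemma mv_mono: assumes A: "A \<in> carrier_mat N N" and nn: "\<forall>i<N. \<forall>j<N. A$$(i,j) \<ge> 0"
  and v: "\<forall>j<N. v j \<le> w j" and i: "i < N"
  shows "mv A v i \<le> mv A w i"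
  unfolding mv_def using A nn v i by (auto intro!: sum_mono mult_left_mono)

lemma K1:
  fixes A :: "real mat"
  assumes A: "A \<in> carrier_mat N N" and N: "N > 0"
  and nn: "\<forall>i<N. \<forall>j<N. A$$(i,j) \<ge> 0" and r1: "rho A < 1"
  shows "\<exists>v. (\<forall>i<N. v i \<ge> 0) \<and> (\<forall>i<N. mv A v i \<le> v i - 1/2)"
proof -
  from K0[OF A r1, of "1/(2*N)"] N obtain K where
    K: "\<forall>i<N. \<forall>j<N. \<bar>(A ^\<^sub>m K) $$ (i,j)\<bar> \<le> 1/(2*N)" by auto
  define v where "v = (\<lambda>l. \<Sum>m<K. mv (A ^\<^sub>m m) (\<lambda>_. 1) l)"
  have "v i \<ge> 0" if "i < N" for i unfolding v_def
    using mv_nonneg[OF pow_carrier_mat[OF A] pow_nonneg[OF A nn]] that by (auto intro!: sum_nonneg)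
  moreover have "mv A v i \<le> v i - 1/2" if i: "i < N" for i
  proof -
    have dc: "dim_col (A ^\<^sub>m K) = N" using A by simp
    have "mv (A ^\<^sub>m K) (\<lambda>_. 1) i \<le> (\<Sum>j=0..<N. 1/(2*N))" unfolding mv_def dc
      using A K i by (intro sum_mono, auto simp: abs_le_iff)
    also have "\<dots> = 1/2" using N by simp
    finally show ?thesis using ITER[OF A i, where K=K and c="\<lambda>_. 1"] unfolding v_def by simp
  qed
  ultimately show ?thesis by auto
qed

lemma rho_nonneg: assumes A: "A \<in> carrier_mat N N" and N: "N > 0" shows "rho A \<ge> 0"
proof -
  have C: "map_mat complex_of_real A \<in> carrier_mat N N" using A by auto
  from spectral_radius_mem_max(1)[OF C N] show ?thesis unfolding rho_def by auto
qed

lemma K2':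
  fixes A :: "real mat"
  assumes A: "A \<in> carrier_mat N N" and N: "N > 0"
  and nn: "\<forall>i<N. \<forall>j<N. A$$(i,j) \<ge> 0"
  and u: "\<forall>i<N. u i > 0" and s: "s > 0" and d: "\<delta> > 0"
  and le: "\<forall>i<N. mv A u i \<le> s * (u i - \<delta>)"
  shows "rho A < s"
proof -
  define Mx where "Mx = Max (u ` {0..<N})"
  have uM: "u i \<le> Mx" if "i < N" for i unfolding Mx_def using that by auto
  have "u 0 > 0" using u N by auto
  moreover have "u 0 \<le> Mx" using uM N by auto
  ultimately have Mx: "Mx > 0" by linarith
  define \<theta> where "\<theta> = s * (1 - \<delta>/Mx)"
  have "\<delta>/Mx > 0" using d Mx by simp
  with s have pos: "s * (\<delta>/Mx) > 0" by (rule mult_pos_pos)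
  have "\<theta> = s - s * (\<delta>/Mx)" unfolding \<theta>_def by (simp add: right_diff_distrib)
  hence th: "\<theta> < s" using pos by linarith
  have "rho A \<le> \<theta>"
  proof (rule K2[OF A N nn u], intro allI impI)
    fix i assume i: "i < N"
    have "u i / Mx \<le> 1" using uM[OF i] Mx by simp
    hence "\<delta> * (u i / Mx) \<le> \<delta>" using d by (intro mult_left_le, auto)
    hence "s * (u i - \<delta>) \<le> s * (u i - \<delta> * (u i / Mx))" using s by (intro mult_left_mono, auto)
    also have "\<dots> = \<theta> * u i" unfolding \<theta>_def by (simp add: field_simps)
    finally have "s * (u i - \<delta>) \<le> \<theta> * u i" .
    moreover have "mv A u i = (\<Sum>j = 0..<N. A $$ (i, j) * u j)" unfolding mv_def using A by simp
    ultimately show "(\<Sum>j = 0..<N. A $$ (i, j) * u j) \<le> \<theta> * u i" using le i by auto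
  qed
  thus ?thesis using th by auto
qed

lemma M:
  fixes A C :: "real mat"
  assumes A: "A \<in> carrier_mat N N" and C: "C \<in> carrier_mat N N" and N: "N > 0"
  and nn: "\<forall>i<N. \<forall>j<N. A$$(i,j) \<ge> 0"
  and le: "\<forall>i<N. \<forall>j<N. A$$(i,j) \<le> C$$(i,j)"
  shows "rho A \<le> rho C"
proof (rule ccontr)
  assume "\<not> ?thesis"
  hence lt: "rho C < rho A" by auto
  define s where "s = (rho A + rho C)/2"
  have s: "rho C < s" "s < rho A" "s > 0" using lt rho_nonneg[OF C N] unfolding s_def by auto
  have C': "(1/s) \<cdot>\<^sub>m C \<in> carrier_mat N N" using C by auto
  have nnC: "\<forall>i<N. \<forall>j<N. C$$(i,j) \<ge> 0" 
  proof (intro allI impI)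
    fix i j assume ij: "i < N" "j < N"
    have "0 \<le> A$$(i,j)" "A$$(i,j) \<le> C$$(i,j)" using nn le ij by auto
    thus "C$$(i,j) \<ge> 0" by linarith
  qed
  have "rho ((1/s) \<cdot>\<^sub>m C) \<le> (1/s) * rho C" using rho_smult_le[OF C N, of "1/s"] s by auto
  also have "\<dots> < 1" using s by (simp add: divide_less_eq)
  finally have r1: "rho ((1/s) \<cdot>\<^sub>m C) < 1" .
  have nnC': "\<forall>i<N. \<forall>j<N. ((1/s) \<cdot>\<^sub>m C)$$(i,j) \<ge> 0" using nnC C s by auto
  from K1[OF C' N nnC' r1] obtain v where v: "\<forall>i<N. v i \<ge> 0" 
    and vle: "\<forall>i<N. mv ((1/s) \<cdot>\<^sub>m C) v i \<le> v i - 1/2" by auto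
  have mvs: "mv ((1/s) \<cdot>\<^sub>m C) v i = (1/s) * mv C v i" if "i < N" for i
    unfolding mv_def using C that by (simp add: sum_distrib_left algebra_simps)
  have "rho A < s"
  proof (rule K2'[OF A N nn _ s(3), of v "1/2"])
    show "\<forall>i<N. 0 < v i"
    proof (intro allI impI)
      fix i assume i: "i < N"
      have "0 \<le> mv ((1/s) \<cdot>\<^sub>m C) v i" by (rule mv_nonneg[OF C' nnC' v i])
      moreover have "mv ((1/s) \<cdot>\<^sub>m C) v i \<le> v i - 1/2" using vle i by auto
      ultimately show "0 < v i" by linarith
    qed
    show "\<forall>i<N. mv A v i \<le> s * (v i - 1/2)"
    proof (intro allI impI)
      fix i assume i: "i < N"
      have dA: "dim_col A = N" "dim_col C = N" using A C by auto
      have "mv A v i \<le> mv C v i" unfolding mv_def dA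
      proof (rule sum_mono)
        fix j assume "j \<in> {0..<N}"
        hence j: "j < N" by auto
        show "A $$ (i, j) * v j \<le> C $$ (i, j) * v j" using le i j v by (intro mult_right_mono, auto)
      qed
      also have "\<dots> = s * mv ((1/s) \<cdot>\<^sub>m C) v i" using mvs[OF i] s by simp
      also have "\<dots> \<le> s * (v i - 1/2)" using vle i s by (intro mult_left_mono, auto)
      finally show "mv A v i \<le> s * (v i - 1/2)" .
    qed
  qed simp
  thus False using s by auto
qed



lemma G:
  fixes z :: "nat \<Rightarrow> real"
  assumes nn: "\<forall>i<N. \<forall>j<N. Lf i j \<ge> 0"
  and tri: "\<forall>i<N. \<forall>j<N. Lf i j \<noteq> 0 \<longrightarrow> j div n < i div n"
  and le: "\<forall>i<N. (\<Sum>j=0..<N. Lf i j * z j) \<le> z i"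
  shows "\<forall>i<N. z i \<ge> 0"
proof -
  have "\<forall>i<N. i div n = a \<longrightarrow> z i \<ge> 0" for a
  proof (induct a rule: less_induct)
    case (less a)
    show ?case
    proof (intro allI impI)
      fix i assume i: "i < N" and a: "i div n = a"
      have "0 \<le> (\<Sum>j=0..<N. Lf i j * z j)"
      proof (rule sum_nonneg)
        fix j assume "j \<in> {0..<N}"
        hence j: "j < N" by auto
        show "0 \<le> Lf i j * z j"
        proof (cases "Lf i j = 0")
          case False
          hence "j div n < a" using tri i j a by auto
          hence "z j \<ge> 0" using less j by auto
          thus ?thesis using nn i j by auto
        qed auto
      qed
      thus "z i \<ge> 0" using le i by (meson order.trans)
    qed
  qed
  thus ?thesis by auto
qed

lemma reindex:
  fixes g :: "nat \<Rightarrow> nat \<Rightarrow> real"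
  shows "(\<Sum>j=0..<d*n. g (j div n) (j mod n)) = (\<Sum>b=0..<d. \<Sum>c=0..<n. g b c)"
proof (induct d)
  case 0 then show ?case by simp
next
  case (Suc d)
  have "(\<Sum>j=0..<Suc d*n. g (j div n) (j mod n)) =
     (\<Sum>j=0..<d*n. g (j div n) (j mod n)) + (\<Sum>j=d*n..<d*n+n. g (j div n) (j mod n))"
    by (subst sum.atLeastLessThan_concat[symmetric], auto simp: add.commute)
  also have "(\<Sum>j=d*n..<d*n+n. g (j div n) (j mod n)) = (\<Sum>c=0..<n. g ((c + d*n) div n) ((c + d*n) mod n))"
    using sum.shift_bounds_nat_ivl[of "\<lambda>j. g (j div n) (j mod n)" 0 "d*n" n] by (simp add: add.commute)
  also have "\<dots> = (\<Sum>c=0..<n. g d c)" by (intro sum.cong, auto)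
  finally show ?case using Suc by simp
qed

lemma mv_minus: assumes L: "L \<in> carrier_mat N N" and i: "i < N"
  shows "mv (1\<^sub>m N - L) w i = w i - mv L w i"
proof -
  have "mv (1\<^sub>m N - L) w i = (\<Sum>j=0..<N. (if i = j then w j else 0) - L$$(i,j) * w j)"
    unfolding mv_def using L i by (intro sum.cong, auto simp: algebra_simps)
  also have "\<dots> = w i - mv L w i" unfolding mv_def using L i by (simp add: sum_subtractf)
  finally show ?thesis .
qed

lemma mv_add: assumes A: "A \<in> carrier_mat N N" and C: "C \<in> carrier_mat N N" and i: "i < N"
  shows "mv (A + C) w i = mv A w i + mv C w i"
  unfolding mv_def using A C i by (simp add: sum.distrib algebra_simps)

locale spl = fixes n :: nat and B :: "real mat" and Bs :: "real mat list"
  assumes B: "B \<in> carrier_mat n n" and nnB: "\<forall>i<n. \<forall>j<n. B$$(i,j) \<ge> 0" 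
    and sp: "is_splitting n B Bs"
begin

abbreviation "d \<equiv> length Bs"
abbreviation "N \<equiv> d * n"
abbreviation "L \<equiv> split_L n Bs"
abbreviation "U \<equiv> split_U n Bs"
abbreviation "T \<equiv> iteration_mat n Bs"

lemma d1: "d \<ge> 1" using sp unfolding is_splitting_def by auto

lemma Bs_car: "p < d \<Longrightarrow> Bs ! p \<in> carrier_mat n n" using sp unfolding is_splitting_def by auto

lemma n_pos: "n > 0"
proof (rule ccontr)
  assume "\<not> n > 0" hence n: "n = 0" by auto
  have "0 < d" using d1 by linarith
  hence "Bs ! 0 \<in> carrier_mat 0 0" "Bs ! 0 \<noteq> 0\<^sub>m 0 0" using sp n unfolding is_splitting_def by auto
  thus False by (auto intro!: eq_matI)
qed

lemma N_pos: "N > 0" using n_pos d1 by auto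

lemma B_sum: "r < n \<Longrightarrow> c < n \<Longrightarrow> B $$ (r,c) = (\<Sum>p<d. (Bs ! p) $$ (r,c))"
proof -
  assume rc: "r < n" "c < n"
  have "B = mat n n (\<lambda>(i,j). \<Sum>p<d. (Bs ! p) $$ (i,j))" using sp unfolding is_splitting_def by auto
  hence "B $$ (r,c) = mat n n (\<lambda>(i,j). \<Sum>p<d. (Bs ! p) $$ (i,j)) $$ (r,c)" by simp
  thus ?thesis using rc by simp
qed

lemma Bs_nonneg: assumes p: "p < d" and rc: "r < n" "c < n" shows "(Bs ! p) $$ (r,c) \<ge> 0"
proof (cases "(Bs ! p) $$ (r,c) = 0")
  case False
  have z: "(Bs ! q) $$ (r,c) = 0" if q: "q < d" "q \<noteq> p" for q
  proof -
    have "hadamard_mat (Bs ! p) (Bs ! q) = 0\<^sub>m n n" using sp p q unfolding is_splitting_def by auto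
    hence "hadamard_mat (Bs ! p) (Bs ! q) $$ (r,c) = 0" using rc by simp
    hence "(Bs ! p) $$ (r,c) * (Bs ! q) $$ (r,c) = 0" 
      using Bs_car[OF p] rc unfolding hadamard_mat_def by auto
    thus ?thesis using False by auto
  qed
  have "B $$ (r,c) = (\<Sum>q<d. (Bs ! q) $$ (r,c))" by (rule B_sum[OF rc])
  also have "\<dots> = (Bs ! p) $$ (r,c) + (\<Sum>q\<in>{..<d} - {p}. (Bs ! q) $$ (r,c))"
    using p by (subst sum.remove[of _ p], auto)
  also have "(\<Sum>q\<in>{..<d} - {p}. (Bs ! q) $$ (r,c)) = 0" using z by (intro sum.neutral, auto)
  finally have "B $$ (r,c) = (Bs ! p) $$ (r,c)" by simp
  moreover have "B $$ (r,c) \<ge> 0" using nnB rc by auto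
  ultimately show ?thesis by simp
qed auto

lemma L_car: "L \<in> carrier_mat N N" unfolding split_L_def by auto
lemma U_car: "U \<in> carrier_mat N N" unfolding split_U_def by auto

lemma div_lt: "j < N \<Longrightarrow> j div n < d" using n_pos by (simp add: less_mult_imp_div_less)

lemma L_entry: "i < N \<Longrightarrow> j < N \<Longrightarrow> L $$ (i,j) = (if i div n > j div n then (Bs ! (j div n)) $$ (i mod n, j mod n) else 0)"
  unfolding split_L_def by simp
lemma U_entry: "i < N \<Longrightarrow> j < N \<Longrightarrow> U $$ (i,j) = (if i div n \<le> j div n then (Bs ! (j div n)) $$ (i mod n, j mod n) else 0)"
  unfolding split_U_def by simp

lemma L_nn: "\<forall>i<N. \<forall>j<N. L $$ (i,j) \<ge> 0"
  using L_entry Bs_nonneg div_lt n_pos by auto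
lemma U_nn: "\<forall>i<N. \<forall>j<N. U $$ (i,j) \<ge> 0"
  using U_entry Bs_nonneg div_lt n_pos by auto
lemma L_tri: "\<forall>i<N. \<forall>j<N. L $$ (i,j) \<noteq> 0 \<longrightarrow> j div n < i div n"
  using L_entry by auto
lemma LU_entry: "i < N \<Longrightarrow> j < N \<Longrightarrow> L $$ (i,j) + U $$ (i,j) = (Bs ! (j div n)) $$ (i mod n, j mod n)"
  using L_entry U_entry by auto

lemma IL_car: "1\<^sub>m N - L \<in> carrier_mat N N" using L_car by auto

lemma det_IL: "det (1\<^sub>m N - L) = 1"
proof -
  let ?A = "transpose_mat (1\<^sub>m N - L)"
  have A: "?A \<in> carrier_mat N N" using IL_car by auto
  have ut: "upper_triangular ?A"
  proof (rule upper_triangularI)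
    fix i j assume ji: "j < i" and i: "i < dim_row ?A"
    hence ij: "i < N" "j < N" using A by auto
    have "j div n \<le> i div n" using ji by (simp add: div_le_mono)
    hence "L $$ (j,i) = 0" using L_entry[OF ij(2,1)] by auto
    thus "?A $$ (i,j) = 0" using ij ji L_car by auto
  qed
  have "det ?A = prod_list (diag_mat ?A)" by (rule det_upper_triangular[OF ut A])
  also have "diag_mat ?A = replicate N 1" unfolding diag_mat_def
    using L_car L_entry by (intro nth_equalityI, auto)
  finally have "det ?A = 1" by simp
  thus ?thesis using det_transpose[OF IL_car] by simp
qed

definition Inv where "Inv = the (mat_inverse (1\<^sub>m N - L))"

lemma Inv: "(1\<^sub>m N - L) * Inv = 1\<^sub>m N" "Inv \<in> carrier_mat N N"
proof -
  have "1\<^sub>m N - L \<in> Units (ring_mat TYPE(real) N ())"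
    by (rule det_non_zero_imp_unit[OF IL_car], simp add: det_IL)
  hence "mat_inverse (1\<^sub>m N - L) \<noteq> None" using mat_inverse(1)[OF IL_car, of "()"] by blast
  then obtain C where C: "mat_inverse (1\<^sub>m N - L) = Some C" by auto
  from mat_inverse(2)[OF IL_car C] C show "(1\<^sub>m N - L) * Inv = 1\<^sub>m N" "Inv \<in> carrier_mat N N"
    unfolding Inv_def by auto
qed

lemma T_def': "T = Inv * U" unfolding iteration_mat_def Inv_def by simp

lemma T_car: "T \<in> carrier_mat N N" using T_def' Inv U_car by auto

lemma T_eq: "T = L * T + U"
proof -
  have "(1\<^sub>m N - L) * T = U" unfolding T_def' 
    using Inv U_car IL_car by (simp add: assoc_mult_mat[symmetric])
  moreover have "(1\<^sub>m N - L) * T = T - L * T" using minus_mult_distrib_mat[OF one_carrier_mat L_car T_car] T_car by simp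
  ultimately have eq: "T - L * T = U" by simp
  show ?thesis
  proof (rule eq_matI)
    fix i j assume ij: "i < dim_row (L * T + U)" "j < dim_col (L * T + U)"
    hence ij': "i < N" "j < N" using L_car T_car U_car by auto
    have "(T - L * T) $$ (i,j) = U $$ (i,j)" using eq by simp
    hence "T $$ (i,j) - (L * T) $$ (i,j) = U $$ (i,j)" using ij' L_car T_car by simp
    thus "T $$ (i,j) = (L * T + U) $$ (i,j)" using ij' L_car T_car U_car by simp
  qed (insert L_car T_car U_car, auto)
qed

lemma mvT: assumes i: "i < N" shows "mv T x i = mv L (mv T x) i + mv U x i"
proof -
  have "mv T x i = mv (L * T + U) x i" using T_eq by simp
  also have "\<dots> = mv (L * T) x i + mv U x i" using L_car T_car U_car i by (intro mv_add, auto)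
  also have "mv (L * T) x i = mv L (mv T x) i" using mv_mult[OF L_car T_car i] by simp
  finally show ?thesis .
qed

lemma T_nn: "\<forall>i<N. \<forall>j<N. T $$ (i,j) \<ge> 0"
proof (intro allI impI)
  fix i j assume i: "i < N" and j: "j < N"
  let ?z = "\<lambda>k. T $$ (k,j)"
  have "\<forall>k<N. ?z k \<ge> 0"
  proof (rule G[OF L_nn L_tri], intro allI impI)
    fix k assume k: "k < N"
    have "T $$ (k,j) = (L * T + U) $$ (k,j)" using T_eq by simp
    also have "\<dots> = (\<Sum>l=0..<N. L $$ (k,l) * T $$ (l,j)) + U $$ (k,j)"
      using L_car T_car U_car k j by (simp add: scalar_prod_def row_def col_def)
    finally show "(\<Sum>l=0..<N. L $$ (k,l) * ?z l) \<le> ?z k" using U_nn k j by auto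
  qed
  thus "T $$ (i,j) \<ge> 0" using i by auto
qed

end


lemma mv_lin: assumes "A \<in> carrier_mat N N"
  shows "mv A (\<lambda>j. a * x j - b * y j) i = a * mv A x i - b * mv A y i"
  unfolding mv_def by (simp add: sum_subtractf sum_distrib_left algebra_simps)

lemma mv_cong: assumes "A \<in> carrier_mat N N" "\<And>j. j < N \<Longrightarrow> x j = y j"
  shows "mv A x i = mv A y i"
  unfolding mv_def using assms by (intro sum.cong, auto)

context spl begin

lemma LU_sum: assumes i: "i < N"
  shows "mv L x i + mv U x i = (\<Sum>b=0..<d. \<Sum>c=0..<n. (Bs ! b) $$ (i mod n, c) * x (b*n + c))"
proof -
  have "mv L x i + mv U x i = (\<Sum>j=0..<N. (L $$ (i,j) + U $$ (i,j)) * x j)"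
    unfolding mv_def using L_car U_car by (simp add: sum.distrib algebra_simps)
  also have "\<dots> = (\<Sum>j=0..<N. (Bs ! (j div n)) $$ (i mod n, j mod n) * x ((j div n) * n + j mod n))"
    using LU_entry i by (intro sum.cong, auto)
  also have "\<dots> = (\<Sum>b=0..<d. \<Sum>c=0..<n. (Bs ! b) $$ (i mod n, c) * x (b*n + c))"
    by (rule reindex[where g = "\<lambda>b c. (Bs ! b) $$ (i mod n, c) * x (b*n + c)"])
  finally show ?thesis .
qed

lemma B_sum2: assumes r: "r < n"
  shows "mv B w r = (\<Sum>b=0..<d. \<Sum>c=0..<n. (Bs ! b) $$ (r, c) * w c)"
proof -
  have "mv B w r = (\<Sum>c=0..<n. \<Sum>b=0..<d. (Bs ! b) $$ (r, c) * w c)"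
    unfolding mv_def using B B_sum r by (auto simp: sum_distrib_right atLeast0LessThan intro!: sum.cong)
  also have "\<dots> = (\<Sum>b=0..<d. \<Sum>c=0..<n. (Bs ! b) $$ (r, c) * w c)" by (rule sum.swap)
  finally show ?thesis .
qed

lemma dir_L: assumes r1: "rho B < 1" shows "rho T < 1"
proof -
  from K1[OF B n_pos nnB r1] obtain v where v: "\<forall>i<n. v i \<ge> 0" 
    and vle: "\<forall>i<n. mv B v i \<le> v i - 1/2" by auto
  define X where "X = (\<lambda>j. v (j mod n))"
  define y where "y = mv T X"
  define z where "z = (\<lambda>i. X i - 1/2 - y i)"
  have "\<forall>i<N. z i \<ge> 0"
  proof (rule G[OF L_nn L_tri], intro allI impI)
    fix i assume i: "i < N"
    have r: "i mod n < n" using n_pos by simp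
    have "mv L z i = 1 * mv L X i - 1/2 * mv L (\<lambda>_. 1) i - mv L y i"
    proof -
      have "z = (\<lambda>j. 1 * X j - 1 * (1/2 + y j))" unfolding z_def by (auto simp: algebra_simps)
      hence "mv L z i = mv L (\<lambda>j. 1 * X j - 1 * (1/2 + y j)) i" by simp
      also have "\<dots> = mv L X i - mv L (\<lambda>j. 1/2 + y j) i" using mv_lin[OF L_car, of 1 X 1] by simp
      also have "mv L (\<lambda>j. 1/2 + y j) i = 1/2 * mv L (\<lambda>_. 1) i + mv L y i"
        unfolding mv_def by (simp add: sum.distrib sum_distrib_left algebra_simps)
      finally show ?thesis by simp
    qed
    moreover have "y i = mv L y i + mv U X i" unfolding y_def using mvT[OF i] .
    moreover have "mv L X i + mv U X i = mv B v (i mod n)"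
      unfolding LU_sum[OF i] B_sum2[OF r] X_def using n_pos by simp
    moreover have "mv L (\<lambda>_. 1) i \<ge> 0" using mv_nonneg[OF L_car L_nn] i by auto
    moreover have "mv B v (i mod n) \<le> v (i mod n) - 1/2" using vle r by auto
    ultimately show "(\<Sum>j=0..<N. L $$ (i,j) * z j) \<le> z i" 
      unfolding mv_def z_def X_def using L_car by simp
  qed
  hence le: "\<forall>i<N. mv T X i \<le> 1 * (X i - 1/2)" unfolding z_def y_def by auto
  have Xpos: "\<forall>i<N. X i > 0"
  proof (intro allI impI)
    fix i assume "i < N"
    have r: "i mod n < n" using n_pos by simp
    have "mv B v (i mod n) \<ge> 0" using mv_nonneg[OF B nnB v r] .
    thus "X i > 0" using vle r unfolding X_def by fastforce
  qed
  show ?thesis using K2'[OF T_car N_pos T_nn Xpos _ _ le] by simp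
qed

lemma dir_R: assumes r1: "rho T < 1" shows "rho B < 1"
proof -
  define c where "c = mv Inv (\<lambda>_. 1)"
  have c1: "c i - mv L c i = 1" if i: "i < N" for i
  proof -
    have "c i - mv L c i = mv (1\<^sub>m N - L) c i" using mv_minus[OF L_car i] by simp
    also have "\<dots> = mv ((1\<^sub>m N - L) * Inv) (\<lambda>_. 1) i" unfolding c_def using mv_mult[OF IL_car Inv(2) i] .
    also have "\<dots> = 1" unfolding Inv(1) using mv_one[OF i] .
    finally show ?thesis .
  qed
  have cnn: "\<forall>i<N. c i \<ge> 0"
  proof (rule G[OF L_nn L_tri], intro allI impI)
    fix i assume i: "i < N"
    show "(\<Sum>j=0..<N. L $$ (i,j) * c j) \<le> c i" using c1[OF i] L_car unfolding mv_def by simp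
  qed
  define Cs where "Cs = (\<Sum>j=0..<N. \<bar>c j\<bar>)"
  define Ls where "Ls = (\<Sum>i=0..<N. \<Sum>j=0..<N. L $$ (i,j))"
  have Cs: "Cs \<ge> 0" unfolding Cs_def by (auto intro!: sum_nonneg)
  have Ls: "Ls \<ge> 0" unfolding Ls_def using L_nn by (auto intro!: sum_nonneg)
  have Lrow: "(\<Sum>j=0..<N. L $$ (i,j)) \<le> Ls" if i: "i < N" for i
    unfolding Ls_def
  proof (rule member_le_sum[of i "{0..<N}" "\<lambda>i. \<Sum>j=0..<N. L $$ (i,j)"])
    fix k assume "k \<in> {0..<N} - {i}"
    thus "0 \<le> (\<Sum>j=0..<N. L $$ (k,j))" using L_nn by (auto intro!: sum_nonneg)
  qed (insert i, auto)
  define \<epsilon> where "\<epsilon> = 1 / (2 * (Cs + 1) * (Ls + 1))"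
  have e: "\<epsilon> > 0" unfolding \<epsilon>_def using Cs Ls by auto
  from K0[OF T_car r1 e] obtain K where K: "\<forall>i<N. \<forall>j<N. \<bar>(T ^\<^sub>m K) $$ (i,j)\<bar> \<le> \<epsilon>" by auto
  define R where "R = mv (T ^\<^sub>m K) c"
  have Rb: "\<bar>R i\<bar> \<le> \<epsilon> * Cs" if i: "i < N" for i
  proof -
    have "\<bar>R i\<bar> \<le> (\<Sum>j=0..<N. \<bar>(T ^\<^sub>m K) $$ (i,j) * c j\<bar>)" unfolding R_def mv_def
      using T_car by (simp add: sum_abs)
    also have "\<dots> \<le> (\<Sum>j=0..<N. \<epsilon> * \<bar>c j\<bar>)" using K i
      by (intro sum_mono, auto simp: abs_mult intro: mult_right_mono)
    also have "\<dots> = \<epsilon> * Cs" unfolding Cs_def by (simp add: sum_distrib_left)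
    finally show ?thesis .
  qed
  have LRb: "\<bar>mv L R i\<bar> \<le> Ls * (\<epsilon> * Cs)" if i: "i < N" for i
  proof -
    have "\<bar>mv L R i\<bar> \<le> (\<Sum>j=0..<N. \<bar>L $$ (i,j) * R j\<bar>)" unfolding mv_def
      using L_car by (simp add: sum_abs)
    also have "\<dots> \<le> (\<Sum>j=0..<N. L $$ (i,j) * (\<epsilon> * Cs))" using L_nn Rb i
      by (intro sum_mono, auto simp: abs_mult intro: mult_left_mono)
    also have "\<dots> = (\<Sum>j=0..<N. L $$ (i,j)) * (\<epsilon> * Cs)" by (simp add: sum_distrib_right)
    also have "\<dots> \<le> Ls * (\<epsilon> * Cs)" using Lrow[OF i] e Cs by (intro mult_right_mono, auto)
    finally show ?thesis .
  qed
  have small: "\<epsilon> * Cs * (1 + Ls) \<le> 1/2"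
  proof -
    have h: "\<epsilon> * (1 + Ls) = 1/(2*(Cs+1))" unfolding \<epsilon>_def using Cs Ls by (simp add: add.commute)
    have "\<epsilon> * Cs * (1 + Ls) = Cs * (\<epsilon> * (1 + Ls))" by (simp add: ac_simps)
    also have "\<dots> = Cs / (2*(Cs+1))" using h by simp
    also have "\<dots> \<le> 1/2" using Cs by (simp add: divide_le_eq)
    finally show ?thesis .
  qed
  define x where "x = (\<lambda>l. \<Sum>m<K. mv (T ^\<^sub>m m) c l)"
  have xnn: "\<forall>j<N. x j \<ge> 0" unfolding x_def
    using mv_nonneg[OF pow_carrier_mat[OF T_car] pow_nonneg[OF T_car T_nn] cnn] by (auto intro!: sum_nonneg)
  have xT: "x i - mv T x i = c i - R i" if i: "i < N" for i
    unfolding x_def R_def using ITER[OF T_car i] by simp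
  define y where "y = mv T x"
  have key: "x i - (mv L x i + mv U x i) \<ge> 1/2" if i: "i < N" for i
  proof -
    have "y i = mv L y i + mv U x i" unfolding y_def using mvT[OF i] .
    hence "x i - (mv L x i + mv U x i) = (x i - y i) - (mv L x i - mv L y i)" by simp
    also have "mv L x i - mv L y i = mv L (\<lambda>j. 1 * x j - 1 * y j) i" using mv_lin[OF L_car, of 1 x 1 y] by simp
    also have "\<dots> = mv L (\<lambda>j. 1 * c j - 1 * R j) i" using xT unfolding y_def by (intro mv_cong[OF L_car], auto)
    also have "\<dots> = mv L c i - mv L R i" using mv_lin[OF L_car, of 1 c 1 R] by simp
    finally have "x i - (mv L x i + mv U x i) = (c i - mv L c i) - R i + mv L R i" using xT[OF i] unfolding y_def by simp
    also have "\<dots> = 1 - (R i - mv L R i)" using c1[OF i] by simp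
    finally have eq: "x i - (mv L x i + mv U x i) = 1 - (R i - mv L R i)" .
    have "\<bar>R i - mv L R i\<bar> \<le> \<epsilon> * Cs + Ls * (\<epsilon> * Cs)" using Rb[OF i] LRb[OF i] by linarith
    also have "\<dots> = \<epsilon> * Cs * (1 + Ls)" by (simp add: algebra_simps)
    finally show ?thesis using eq small by linarith
  qed
  define S where "S = (\<lambda>r. \<Sum>b=0..<d. \<Sum>c=0..<n. (Bs ! b) $$ (r, c) * x (b*n + c))"
  define u where "u = (\<lambda>r. 1/2 + S r)"
  have Snn: "S r \<ge> 0" if r: "r < n" for r
    unfolding S_def using Bs_nonneg r xnn
  proof (intro sum_nonneg mult_nonneg_nonneg)
    fix b cc assume b: "b \<in> {0..<d}" and cc: "cc \<in> {0..<n}"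
    have "b * n + cc < N" using b cc
      by (metis atLeastLessThan_iff add.commute mult.commute mult_Suc_right nat_add_left_cancel_less
        order_less_le_trans mult_le_mono2 Suc_le_eq)
    thus "0 \<le> x (b * n + cc)" using xnn by auto
  qed (auto)
  have xu: "u c \<le> x (b*n + c)" if b: "b < d" and c: "c < n" for b c
  proof -
    have bc: "b * n + c < N"
    proof -
      have "b * n + c < b * n + n" using c by simp
      also have "\<dots> = Suc b * n" by simp
      also have "\<dots> \<le> d * n" using b by (intro mult_le_mono1, auto)
      finally show ?thesis .
    qed
    have md: "(b * n + c) mod n = c" using c by simp
    have "x (b*n+c) - (mv L x (b*n+c) + mv U x (b*n+c)) \<ge> 1/2" by (rule key[OF bc])
    thus ?thesis unfolding u_def S_def LU_sum[OF bc] md by simp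
  qed
  have upos: "\<forall>r<n. u r > 0" unfolding u_def using Snn by (auto simp: add_pos_nonneg)
  have le: "\<forall>r<n. mv B u r \<le> 1 * (u r - 1/2)"
  proof (intro allI impI)
    fix r assume r: "r < n"
    have "mv B u r = (\<Sum>b=0..<d. \<Sum>c=0..<n. (Bs ! b) $$ (r, c) * u c)" by (rule B_sum2[OF r])
    also have "\<dots> \<le> S r" unfolding S_def
      using Bs_nonneg r xu by (intro sum_mono mult_left_mono, auto)
    finally show "mv B u r \<le> 1 * (u r - 1/2)" unfolding u_def by simp
  qed
  show ?thesis using K2'[OF B n_pos nnB upos _ _ le] by simp
qed

end


lemma smult_smult_mat: "(a::real) \<cdot>\<^sub>m (b \<cdot>\<^sub>m A) = (a * b) \<cdot>\<^sub>m A"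
  by (rule eq_matI, auto)

context spl begin

lemma T_entry: assumes k: "k < N" and j: "j < N"
  shows "T $$ (k,j) = (\<Sum>l=0..<N. L $$ (k,l) * T $$ (l,j)) + U $$ (k,j)"
proof -
  have "T $$ (k,j) = (L * T + U) $$ (k,j)" using T_eq by simp
  also have "\<dots> = (\<Sum>l=0..<N. L $$ (k,l) * T $$ (l,j)) + U $$ (k,j)"
    using L_car T_car U_car k j by (simp add: scalar_prod_def row_def col_def)
  finally show ?thesis .
qed

definition "Bt t = map (\<lambda>M. t \<cdot>\<^sub>m M) Bs"

lemma spl_t: assumes t: "t > 0" shows "spl n (t \<cdot>\<^sub>m B) (Bt t)"
proof
  show "t \<cdot>\<^sub>m B \<in> carrier_mat n n" using B by auto
  show "\<forall>i<n. \<forall>j<n. 0 \<le> (t \<cdot>\<^sub>m B) $$ (i, j)" using nnB B t by auto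
  show "is_splitting n (t \<cdot>\<^sub>m B) (Bt t)" unfolding is_splitting_def
  proof (intro conjI allI impI)
    show "1 \<le> length (Bt t)" using d1 unfolding Bt_def by simp
    fix p assume p: "p < length (Bt t)"
    hence p': "p < d" unfolding Bt_def by simp
    show "Bt t ! p \<in> carrier_mat n n" using Bs_car[OF p'] p' unfolding Bt_def by simp
    show "Bt t ! p \<noteq> 0\<^sub>m n n"
    proof
      assume "Bt t ! p = 0\<^sub>m n n"
      hence eq: "t \<cdot>\<^sub>m (Bs ! p) = 0\<^sub>m n n" using p' unfolding Bt_def by simp
      have "Bs ! p = 0\<^sub>m n n"
      proof (rule eq_matI)
        fix i j assume ij: "i < dim_row (0\<^sub>m n n :: real mat)" "j < dim_col (0\<^sub>m n n :: real mat)"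
        have "(t \<cdot>\<^sub>m (Bs ! p)) $$ (i,j) = 0" using eq ij by simp
        thus "Bs ! p $$ (i,j) = 0\<^sub>m n n $$ (i,j)" using ij t Bs_car[OF p'] by simp
      qed (insert Bs_car[OF p'], auto)
      thus False using sp p' unfolding is_splitting_def by auto
    qed
    fix q assume q: "q < length (Bt t)" and pq: "p \<noteq> q"
    hence q': "q < d" unfolding Bt_def by simp
    have h: "hadamard_mat (Bs ! p) (Bs ! q) = 0\<^sub>m n n" using sp p' q' pq unfolding is_splitting_def by auto
    show "hadamard_mat (Bt t ! p) (Bt t ! q) = 0\<^sub>m n n"
    proof (rule eq_matI)
      fix i j assume ij: "i < dim_row (0\<^sub>m n n :: real mat)" "j < dim_col (0\<^sub>m n n :: real mat)"
      have "hadamard_mat (Bs ! p) (Bs ! q) $$ (i,j) = 0" using h ij by simp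
      hence "(Bs ! p) $$ (i,j) * (Bs ! q) $$ (i,j) = 0" using Bs_car[OF p'] ij unfolding hadamard_mat_def by simp
      thus "hadamard_mat (Bt t ! p) (Bt t ! q) $$ (i,j) = 0\<^sub>m n n $$ (i,j)"
        using ij p' q' Bs_car[OF p'] Bs_car[OF q'] unfolding hadamard_mat_def Bt_def by auto
    qed (insert Bs_car[OF p'], auto simp: hadamard_mat_def Bt_def p')
  next
    show "mat n n (\<lambda>(i, j). \<Sum>p<length (Bt t). Bt t ! p $$ (i, j)) = t \<cdot>\<^sub>m B"
    proof (rule eq_matI)
      fix i j assume ij: "i < dim_row (t \<cdot>\<^sub>m B)" "j < dim_col (t \<cdot>\<^sub>m B)"
      hence ij': "i < n" "j < n" using B by auto
      have "(\<Sum>p<length (Bt t). Bt t ! p $$ (i, j)) = (\<Sum>p<d. t * (Bs ! p) $$ (i, j))"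
        unfolding Bt_def using ij' by (intro sum.cong, auto simp: carrier_matD[OF Bs_car])
      also have "\<dots> = t * B $$ (i,j)" using B_sum[OF ij'] by (simp add: sum_distrib_left)
      finally show "mat n n (\<lambda>(i, j). \<Sum>p<length (Bt t). Bt t ! p $$ (i, j)) $$ (i, j) = (t \<cdot>\<^sub>m B) $$ (i, j)"
        using ij' B by simp
    qed (insert B, auto)
  qed
qed

lemma len_Bt[simp]: "length (Bt t) = d" unfolding Bt_def by simp

lemma sm_idx: assumes "i < N" "j < N"
  shows "(t \<cdot>\<^sub>m Bs ! (j div n)) $$ (i mod n, j mod n) = t * Bs ! (j div n) $$ (i mod n, j mod n)"
proof -
  have "Bs ! (j div n) \<in> carrier_mat n n" using Bs_car div_lt assms by auto
  thus ?thesis using n_pos by simp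
qed

lemma L_t: "split_L n (Bt t) = t \<cdot>\<^sub>m L"
  unfolding split_L_def Bt_def using div_lt sm_idx
  by (intro eq_matI, auto)

lemma U_t: "split_U n (Bt t) = t \<cdot>\<^sub>m U"
  unfolding split_U_def Bt_def using div_lt sm_idx
  by (intro eq_matI, auto)

lemma cmp_upper: assumes t: "0 < t" "t \<le> 1" and ij: "i < N" "j < N"
  shows "iteration_mat n (Bt t) $$ (i,j) \<le> t * T $$ (i,j)"
proof -
  interpret S: spl n "t \<cdot>\<^sub>m B" "Bt t" by (rule spl_t[OF t(1)])
  let ?Tt = "iteration_mat n (Bt t)"
  define z where "z = (\<lambda>k. t * T $$ (k,j) - ?Tt $$ (k,j))"
  have tL_nn: "\<forall>i<N. \<forall>j<N. t * L $$ (i,j) \<ge> 0" using L_nn t by auto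
  have tL_tri: "\<forall>i<N. \<forall>j<N. t * L $$ (i,j) \<noteq> 0 \<longrightarrow> j div n < i div n" using L_tri by auto
  have "\<forall>k<N. z k \<ge> 0"
  proof (rule G[OF tL_nn tL_tri], intro allI impI)
    fix k assume k: "k < N"
    have Tk: "T $$ (k,j) = (\<Sum>l=0..<N. L $$ (k,l) * T $$ (l,j)) + U $$ (k,j)" by (rule T_entry[OF k ij(2)])
    have Ttk: "?Tt $$ (k,j) = (\<Sum>l=0..<N. (t * L $$ (k,l)) * ?Tt $$ (l,j)) + t * U $$ (k,j)"
      using S.T_entry[of k j] k ij L_t U_t L_car U_car by simp
    have "(\<Sum>l=0..<N. t * L $$ (k,l) * z l) = t * t * (\<Sum>l=0..<N. L $$ (k,l) * T $$ (l,j))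
       - (\<Sum>l=0..<N. (t * L $$ (k,l)) * ?Tt $$ (l,j))"
      unfolding z_def by (simp add: algebra_simps sum_subtractf sum_distrib_left)
    also have "\<dots> \<le> t * (\<Sum>l=0..<N. L $$ (k,l) * T $$ (l,j)) - (\<Sum>l=0..<N. (t * L $$ (k,l)) * ?Tt $$ (l,j))"
    proof -
      have "0 \<le> (\<Sum>l=0..<N. L $$ (k,l) * T $$ (l,j))" using L_nn T_nn k ij by (auto intro!: sum_nonneg)
      hence "0 \<le> t * (\<Sum>l=0..<N. L $$ (k,l) * T $$ (l,j))" using t by simp
      hence "t * (t * (\<Sum>l=0..<N. L $$ (k,l) * T $$ (l,j))) \<le> t * (\<Sum>l=0..<N. L $$ (k,l) * T $$ (l,j))"
        using t by (intro mult_left_le_one_le, auto)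
      thus ?thesis by (simp add: mult.assoc)
    qed
    also have "\<dots> = z k" unfolding z_def using Tk Ttk by (simp add: algebra_simps)
    finally show "(\<Sum>l=0..<N. t * L $$ (k,l) * z l) \<le> z k" .
  qed
  thus ?thesis using ij unfolding z_def by auto
qed

lemma cmp_lower: assumes t: "0 < t" "t \<le> 1" and ij: "i < N" "j < N"
  shows "t ^ d * T $$ (i,j) \<le> iteration_mat n (Bt t) $$ (i,j)"
proof -
  interpret S: spl n "t \<cdot>\<^sub>m B" "Bt t" by (rule spl_t[OF t(1)])
  let ?Tt = "iteration_mat n (Bt t)"
  define z where "z = (\<lambda>k. ?Tt $$ (k,j) - t ^ (k div n + 1) * T $$ (k,j))"
  have tL_nn: "\<forall>i<N. \<forall>j<N. t * L $$ (i,j) \<ge> 0" using L_nn t by auto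
  have tL_tri: "\<forall>i<N. \<forall>j<N. t * L $$ (i,j) \<noteq> 0 \<longrightarrow> j div n < i div n" using L_tri by auto
  have "\<forall>k<N. z k \<ge> 0"
  proof (rule G[OF tL_nn tL_tri], intro allI impI)
    fix k assume k: "k < N"
    define a where "a = k div n"
    have Tk: "T $$ (k,j) = (\<Sum>l=0..<N. L $$ (k,l) * T $$ (l,j)) + U $$ (k,j)" by (rule T_entry[OF k ij(2)])
    have Ttk: "?Tt $$ (k,j) = (\<Sum>l=0..<N. (t * L $$ (k,l)) * ?Tt $$ (l,j)) + t * U $$ (k,j)"
      using S.T_entry[of k j] k ij L_t U_t L_car U_car by simp
    have "z k - (\<Sum>l=0..<N. t * L $$ (k,l) * z l) = 
       (t - t^(a+1)) * U $$ (k,j) + (\<Sum>l=0..<N. L $$ (k,l) * ((t ^ (l div n + 2) - t^(a+1)) * T $$ (l,j)))"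
      unfolding z_def a_def using Tk Ttk
      by (simp add: algebra_simps sum_subtractf sum_distrib_left sum.distrib power_add power2_eq_square)
    also have "\<dots> \<ge> 0"
    proof -
      have "0 \<le> t - t ^ (a + 1)" using t by (simp add: power_le_one mult_left_le)
      hence "0 \<le> (t - t^(a+1)) * U $$ (k,j)" using U_nn k ij by auto
      moreover have "0 \<le> (\<Sum>l=0..<N. L $$ (k,l) * ((t ^ (l div n + 2) - t^(a+1)) * T $$ (l,j)))"
      proof (rule sum_nonneg)
        fix l assume "l \<in> {0..<N}"
        hence l: "l < N" by auto
        show "0 \<le> L $$ (k,l) * ((t ^ (l div n + 2) - t^(a+1)) * T $$ (l,j))"
        proof (cases "L $$ (k,l) = 0")
          case False
          hence "l div n < a" using L_tri k l unfolding a_def by auto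
          hence "t^(a+1) \<le> t^(l div n + 2)" using t by (intro power_decreasing, auto)
          thus ?thesis using L_nn T_nn k l ij by (intro mult_nonneg_nonneg, auto)
        qed simp
      qed
      ultimately show ?thesis by simp
    qed
    finally show "(\<Sum>l=0..<N. t * L $$ (k,l) * z l) \<le> z k" by simp
  qed
  hence "z i \<ge> 0" using ij by auto
  hence "t ^ (i div n + 1) * T $$ (i,j) \<le> ?Tt $$ (i,j)" unfolding z_def by simp
  moreover have "t ^ d \<le> t ^ (i div n + 1)" using div_lt[OF ij(1)] t by (intro power_decreasing, auto)
  ultimately show ?thesis using T_nn ij by (meson mult_right_mono order.trans)
qed

end


context spl begin

lemma Tt_facts: assumes t: "0 < t"
  shows "iteration_mat n (Bt t) \<in> carrier_mat N N"
    "\<forall>i<N. \<forall>j<N. iteration_mat n (Bt t) $$ (i,j) \<ge> 0"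
    "rho (t \<cdot>\<^sub>m B) < 1 \<longleftrightarrow> rho (iteration_mat n (Bt t)) < 1"
proof -
  interpret S: spl n "t \<cdot>\<^sub>m B" "Bt t" by (rule spl_t[OF t])
  show "iteration_mat n (Bt t) \<in> carrier_mat N N" using S.T_car by simp
  show "\<forall>i<N. \<forall>j<N. iteration_mat n (Bt t) $$ (i,j) \<ge> 0" using S.T_nn by simp
  show "rho (t \<cdot>\<^sub>m B) < 1 \<longleftrightarrow> rho (iteration_mat n (Bt t)) < 1" using S.dir_L S.dir_R by blast
qed

lemma inv_smult: "(c::real) \<noteq> 0 \<Longrightarrow> A \<in> carrier_mat m m \<Longrightarrow> (1/c) \<cdot>\<^sub>m (c \<cdot>\<^sub>m A) = A"
  by (intro eq_matI, auto)

lemma gt_iff: "rho B > 1 \<longleftrightarrow> rho T > 1"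
proof
  assume g: "rho B > 1"
  define t where "t = 1 / rho B"
  have t: "0 < t" "t < 1" using g by (auto simp: t_def)
  note Tt = Tt_facts[OF t(1)]
  have "rho B = rho ((1/t) \<cdot>\<^sub>m (t \<cdot>\<^sub>m B))" using inv_smult[OF _ B, of t] t by simp
  also have "\<dots> \<le> (1/t) * rho (t \<cdot>\<^sub>m B)" using t B n_pos by (intro rho_smult_le, auto)
  finally have "t * rho B \<le> rho (t \<cdot>\<^sub>m B)" using t by (simp add: field_simps)
  moreover have "t * rho B = 1" unfolding t_def using g by simp
  ultimately have "\<not> rho (iteration_mat n (Bt t)) < 1" using Tt(3) by auto
  hence "1 \<le> rho (iteration_mat n (Bt t))" by simp
  also have "\<dots> \<le> rho (t \<cdot>\<^sub>m T)"
  proof (rule M[OF Tt(1) _ N_pos Tt(2)])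
    show "t \<cdot>\<^sub>m T \<in> carrier_mat N N" using T_car by simp
    show "\<forall>i<N. \<forall>j<N. iteration_mat n (Bt t) $$ (i, j) \<le> (t \<cdot>\<^sub>m T) $$ (i, j)"
      using cmp_upper t T_car by auto
  qed
  also have "\<dots> \<le> t * rho T" using t T_car N_pos by (intro rho_smult_le, auto)
  finally have "1 \<le> t * rho T" .
  hence "1 / t \<le> rho T" using t by (simp add: field_simps)
  moreover have "1 / t = rho B" unfolding t_def by simp
  ultimately show "rho T > 1" using g by simp
next
  assume g: "rho T > 1"
  define x where "x = 1 - 1 / rho T"
  have x: "0 < x" "x < 1" unfolding x_def using g by auto
  have dpos: "real d \<ge> 1" using d1 by simp
  define t where "t = 1 - x / d"
  have xd1: "x / d \<le> x" using x dpos by (auto simp: divide_le_eq)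
  have xd2: "0 < x / d" using x dpos by (intro divide_pos_pos, auto)
  note xd = xd1 xd2
  have t: "0 < t" "t < 1" unfolding t_def using xd x by auto
  have "1 + real d * (- (x / d)) \<le> (1 + - (x / d)) ^ d"
    by (rule Bernoulli_inequality, insert xd x, auto)
  moreover have "1 + real d * (- (x / d)) = 1 / rho T"
  proof -
    have dnz: "real d \<noteq> 0" using dpos by linarith
    have "real d * (x / real d) = x" using dnz by simp
    thus ?thesis unfolding x_def by simp
  qed
  moreover have "1 + - (x / d) = t" unfolding t_def by simp
  ultimately have td: "1 / rho T \<le> t ^ d" by simp
  note Tt = Tt_facts[OF t(1)]
  have tdpos: "t ^ d > 0" using t by simp
  have M1: "rho (t^d \<cdot>\<^sub>m T) \<le> rho (iteration_mat n (Bt t))"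
  proof (rule M[OF _ Tt(1) N_pos])
    show "t^d \<cdot>\<^sub>m T \<in> carrier_mat N N" using T_car by simp
    show "\<forall>i<N. \<forall>j<N. 0 \<le> (t^d \<cdot>\<^sub>m T) $$ (i, j)" using T_nn T_car tdpos by auto
    show "\<forall>i<N. \<forall>j<N. (t^d \<cdot>\<^sub>m T) $$ (i, j) \<le> iteration_mat n (Bt t) $$ (i, j)"
      using cmp_lower t T_car by auto
  qed
  have "rho T = rho ((1/t^d) \<cdot>\<^sub>m (t^d \<cdot>\<^sub>m T))" using inv_smult[OF _ T_car, of "t^d"] tdpos by (metis less_irrefl)
  also have "\<dots> \<le> (1/t^d) * rho (t^d \<cdot>\<^sub>m T)" using tdpos T_car N_pos by (intro rho_smult_le, auto)
  also have "\<dots> \<le> (1/t^d) * rho (iteration_mat n (Bt t))" using M1 tdpos by (intro mult_left_mono, auto)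
  finally have "rho T \<le> (1/t^d) * rho (iteration_mat n (Bt t))" .
  hence "t^d * rho T \<le> rho (iteration_mat n (Bt t))" using tdpos by (simp add: field_simps)
  moreover have "1 \<le> t^d * rho T" using td g by (simp add: field_simps)
  ultimately have "\<not> rho (t \<cdot>\<^sub>m B) < 1" using Tt(3) by auto
  hence "1 \<le> rho (t \<cdot>\<^sub>m B)" by simp
  also have "\<dots> \<le> t * rho B" using t B n_pos by (intro rho_smult_le, auto)
  finally have "1 / t \<le> rho B" using t by (simp add: field_simps)
  moreover have "1 < 1 / t" using t by simp
  ultimately show "rho B > 1" by simp
qed

lemma final:
  "(rho B < 1 \<longleftrightarrow> rho T < 1) \<and> (rho B = 1 \<longleftrightarrow> rho T = 1) \<and> (rho B > 1 \<longleftrightarrow> rho T > 1)"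
proof -
  have a: "rho B < 1 \<longleftrightarrow> rho T < 1" using dir_L dir_R by blast
  have b: "rho B > 1 \<longleftrightarrow> rho T > 1" by (rule gt_iff)
  have c: "(x::real) = 1 \<longleftrightarrow> \<not> x < 1 \<and> \<not> x > 1" for x by auto
  show ?thesis unfolding c[of "rho B"] c[of "rho T"] a b by simp
qed

end

theorem lemma3p2:
  fixes n :: nat and BJ :: "real mat" and Bs :: "real mat list"
  assumes "BJ \<in> carrier_mat n n"
    and "\<forall>i < n. \<forall>j < n. BJ $$ (i,j) \<ge> 0"
    and "rho BJ > 0"
    and "is_splitting n BJ Bs"
    and "length Bs \<ge> 2"
  shows "(rho BJ < 1 \<longleftrightarrow> rho (iteration_mat n Bs) < 1)
       \<and> (rho BJ = 1 \<longleftrightarrow> rho (iteration_mat n Bs) = 1)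
       \<and> (rho BJ > 1 \<longleftrightarrow> rho (iteration_mat n Bs) > 1)"
proof -
  interpret spl n BJ Bs using assms(1,2,4) by unfold_locales
  show ?thesis by (rule final)
qed

end
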